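(* Every 5-crown is $(2P_3,C_4,C_6,C_7,\text{3-pentagon})$-free. Moreover, every 5-crown is anticonnected and contains no universal and no simplicial vertices.
   Context: Graphs are finite, simple, nonnull. A graph is $(H_1,\dots,H_m)$-free if it has no induced subgraph isomorphic to any $H_i$. $P_k$, $C_k$ are the path and cycle on $k$ vertices; $2P_3$ is two disjoint copies of $P_3$. The 3-pentagon is the graph on vertices $a,b_1,b_2,b_3,c_1,c_2,c_3$ where $a$ is adjacent to each $b_i$ and to no $c_i$, $\{b_1,b_2,b_3\}$ is stable, $\{c_1,c_2,c_3\}$ is a clique, and $b_ic_j$ is an edge iff $i=j$. A graph is anticonnected if its complement is connected. A vertex is simplicial if its neighbours form a (possibly empty) clique, universal if adjacent to all other vertices. A 5-ring is a graph $R$ whose vertex set partitions into nonempty sets $X_0,\dots,X_4$ (indices mod 5) such that each $X_i$ can be ordered $u^i_1,\dots,u^i_{|X_i|}$ with $X_i\subseteq N_R[u^i_{|X_i|}]\subseteq\dots\subseteq N_R[u^i_1]=X_{i-1}\cup X_i\cup X_{i+1}$ (closed neighbourhoods). A 5-crown is a 5-ring with such a partition $(X_0,\dots,X_4)$ for which there is $i^*\in\mathbb{Z}_5$ with $X_{i^*-1}$ complete to $X_{i^*-2}$ and $X_{i^*+1}$ complete to $X_{i^*+2}$ (a set $X$ is complete to $Y$ if every vertex of $X$ is adjacent to every vertex of $Y$). *)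

theory Defs
  imports Main
begin

definition graph :: "'a set \<Rightarrow> ('a \<Rightarrow> 'a \<Rightarrow> bool) \<Rightarrow> bool" where
  "graph V E \<longleftrightarrow> finite V \<and> V \<noteq> {} \<and>
     (\<forall>x y. E x y \<longrightarrow> x \<in> V \<and> y \<in> V) \<and>
     (\<forall>x y. E x y \<longrightarrow> E y x) \<and> (\<forall>x. \<not> E x x)"

definition contains_induced ::
  "'a set \<Rightarrow> ('a \<Rightarrow> 'a \<Rightarrow> bool) \<Rightarrow> 'b set \<Rightarrow> ('b \<Rightarrow> 'b \<Rightarrow> bool) \<Rightarrow> bool" where
  "contains_induced V E W F \<longleftrightarrow>
     (\<exists>f. inj_on f W \<and> f ` W \<subseteq> V \<and> (\<forall>x\<in>W. \<forall>y\<in>W. F x y \<longleftrightarrow> E (f x) (f y)))"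

definition H_free ::
  "'a set \<Rightarrow> ('a \<Rightarrow> 'a \<Rightarrow> bool) \<Rightarrow> 'b set \<Rightarrow> ('b \<Rightarrow> 'b \<Rightarrow> bool) \<Rightarrow> bool" where
  "H_free V E W F \<longleftrightarrow> \<not> contains_induced V E W F"

definition cycle_V :: "nat \<Rightarrow> nat set" where "cycle_V k = {0..<k}"
definition cycle_E :: "nat \<Rightarrow> nat \<Rightarrow> nat \<Rightarrow> bool" where
  "cycle_E k x y \<longleftrightarrow> x < k \<and> y < k \<and> (y = (x + 1) mod k \<or> x = (y + 1) mod k)"

definition twoP3_V :: "nat set" where "twoP3_V = {0..<6}"
definition twoP3_E :: "nat \<Rightarrow> nat \<Rightarrow> bool" where
  "twoP3_E x y \<longleftrightarrow> {x, y} \<in> {{0,1},{1,2},{3,4},{4,5}}"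

text \<open>3-pentagon: a = 0, b_i = i (i=1,2,3), c_i = i+3.\<close>
definition pent3_V :: "nat set" where "pent3_V = {0..<7}"
definition pent3_E :: "nat \<Rightarrow> nat \<Rightarrow> bool" where
  "pent3_E x y \<longleftrightarrow> {x, y} \<in> {{0,1},{0,2},{0,3},{4,5},{4,6},{5,6},{1,4},{2,5},{3,6}}"

definition closed_nbhd :: "'a set \<Rightarrow> ('a \<Rightarrow> 'a \<Rightarrow> bool) \<Rightarrow> 'a \<Rightarrow> 'a set" where
  "closed_nbhd V E v = {u \<in> V. u = v \<or> E v u}"

definition connected_graph :: "'a set \<Rightarrow> ('a \<Rightarrow> 'a \<Rightarrow> bool) \<Rightarrow> bool" where
  "connected_graph V E \<longleftrightarrow> (\<forall>x\<in>V. \<forall>y\<in>V. (\<lambda>a b. a \<in> V \<and> b \<in> V \<and> E a b)\<^sup>*\<^sup>* x y)"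

definition complement :: "'a set \<Rightarrow> ('a \<Rightarrow> 'a \<Rightarrow> bool) \<Rightarrow> 'a \<Rightarrow> 'a \<Rightarrow> bool" where
  "complement V E x y \<longleftrightarrow> x \<in> V \<and> y \<in> V \<and> x \<noteq> y \<and> \<not> E x y"

definition anticonnected :: "'a set \<Rightarrow> ('a \<Rightarrow> 'a \<Rightarrow> bool) \<Rightarrow> bool" where
  "anticonnected V E \<longleftrightarrow> connected_graph V (complement V E)"

definition universal :: "'a set \<Rightarrow> ('a \<Rightarrow> 'a \<Rightarrow> bool) \<Rightarrow> 'a \<Rightarrow> bool" where
  "universal V E v \<longleftrightarrow> v \<in> V \<and> (\<forall>u\<in>V. u \<noteq> v \<longrightarrow> E v u)"

definition simplicial :: "'a set \<Rightarrow> ('a \<Rightarrow> 'a \<Rightarrow> bool) \<Rightarrow> 'a \<Rightarrow> bool" where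
  "simplicial V E v \<longleftrightarrow> v \<in> V \<and>
     (\<forall>x\<in>V. \<forall>y\<in>V. E v x \<and> E v y \<and> x \<noteq> y \<longrightarrow> E x y)"

definition complete_to :: "('a \<Rightarrow> 'a \<Rightarrow> bool) \<Rightarrow> 'a set \<Rightarrow> 'a set \<Rightarrow> bool" where
  "complete_to E A B \<longleftrightarrow> (\<forall>x\<in>A. \<forall>y\<in>B. E x y)"

text \<open>(X 0,...,X 4) is a 5-ring partition of G (indices mod 5; X i - 1 = X ((i+4) mod 5)).\<close>
definition five_ring_partition :: "'a set \<Rightarrow> ('a \<Rightarrow> 'a \<Rightarrow> bool) \<Rightarrow> (nat \<Rightarrow> 'a set) \<Rightarrow> bool" where
  "five_ring_partition V E X \<longleftrightarrow>
     (\<forall>i<5. X i \<noteq> {}) \<and> (\<Union>i<5. X i) = V \<and>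
     (\<forall>i<5. \<forall>j<5. i \<noteq> j \<longrightarrow> X i \<inter> X j = {}) \<and>
     (\<forall>i<5. \<exists>us. distinct us \<and> set us = X i \<and>
        closed_nbhd V E (us ! 0) = X ((i + 4) mod 5) \<union> X i \<union> X ((i + 1) mod 5) \<and>
        (\<forall>j. j + 1 < length us \<longrightarrow> closed_nbhd V E (us ! (j + 1)) \<subseteq> closed_nbhd V E (us ! j)) \<and>
        X i \<subseteq> closed_nbhd V E (last us))"

definition five_ring :: "'a set \<Rightarrow> ('a \<Rightarrow> 'a \<Rightarrow> bool) \<Rightarrow> bool" where
  "five_ring V E \<longleftrightarrow> (\<exists>X. five_ring_partition V E X)"

definition five_crown :: "'a set \<Rightarrow> ('a \<Rightarrow> 'a \<Rightarrow> bool) \<Rightarrow> bool" where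
  "five_crown V E \<longleftrightarrow> (\<exists>X. five_ring_partition V E X \<and>
     (\<exists>i<5. complete_to E (X ((i + 4) mod 5)) (X ((i + 3) mod 5)) \<and>
            complete_to E (X ((i + 1) mod 5)) (X ((i + 2) mod 5))))"

end

theory Submission
  imports Defs
begin

definition near :: "nat \<Rightarrow> nat \<Rightarrow> bool" where
  "near i j \<longleftrightarrow> i = j \<or> j = (i+1) mod 5 \<or> i = (j+1) mod 5"

lemma less5E: "(a::nat) < 5 \<Longrightarrow> (a = 0 \<Longrightarrow> P) \<Longrightarrow> (a = 1 \<Longrightarrow> P) \<Longrightarrow> (a = 2 \<Longrightarrow> P) \<Longrightarrow> (a = 3 \<Longrightarrow> P) \<Longrightarrow> (a = 4 \<Longrightarrow> P) \<Longrightarrow> P"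
  by (auto simp: less_Suc_eq numeral_eq_Suc)

lemma near_opts: "i < (5::nat) \<Longrightarrow> j = (i+4) mod 5 \<or> j = i \<or> j = (i+1) mod 5 \<Longrightarrow> near i j"
  by (erule less5E; auto simp: near_def)

lemma near_opts_rev: "i < (5::nat) \<Longrightarrow> j < 5 \<Longrightarrow> near i j \<Longrightarrow> j = (i+4) mod 5 \<or> j = i \<or> j = (i+1) mod 5"
  by (erule less5E; erule less5E; simp add: near_def)

lemma near_tab: "a < 5 \<Longrightarrow> b < (5::nat) \<Longrightarrow> near a b \<longleftrightarrow> (a = 0 \<and> (b = 0 \<or> b = 1 \<or> b = 4)) \<or> (a = 1 \<and> (b = 0 \<or> b = 1 \<or> b = 2))
  \<or> (a = 2 \<and> (b = 1 \<or> b = 2 \<or> b = 3)) \<or> (a = 3 \<and> (b = 2 \<or> b = 3 \<or> b = 4)) \<or> (a = 4 \<and> (b = 3 \<or> b = 4 \<or> b = 0))"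
  by (erule less5E; erule less5E; simp add: near_def)

lemma c4_col: "a<5 \<Longrightarrow> b<5 \<Longrightarrow> c<5 \<Longrightarrow> d<5 \<Longrightarrow> near a b \<Longrightarrow> near b c \<Longrightarrow> near c d \<Longrightarrow> near d a \<Longrightarrow>
  a \<noteq> b \<Longrightarrow> a \<noteq> c \<Longrightarrow> a \<noteq> d \<Longrightarrow> b \<noteq> c \<Longrightarrow> b \<noteq> d \<Longrightarrow> c \<noteq> d \<Longrightarrow> False"
  by (erule less5E; simp add: near_tab; elim disjE; simp add: near_tab; elim disjE; simp add: near_tab)

lemma near3: "a < 5 \<Longrightarrow> x < (5::nat) \<Longrightarrow> near a x \<Longrightarrow> x = a \<or> x = (a+1) mod 5 \<or> x = (a+4) mod 5"
  by (erule less5E; erule less5E; simp add: near_def)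

lemma p14: "a < (5::nat) \<Longrightarrow> (a+1) mod 5 \<noteq> (a+4) mod 5 \<and> (a+1) mod 5 \<noteq> a \<and> (a+4) mod 5 \<noteq> a"
  by (erule less5E; simp)

lemma pent_col: "a<5 \<Longrightarrow> b1<5 \<Longrightarrow> b2<5 \<Longrightarrow> b3<5 \<Longrightarrow> c1<5 \<Longrightarrow> c2<5 \<Longrightarrow> c3<5 \<Longrightarrow>
  near a b1 \<Longrightarrow> near a b2 \<Longrightarrow> near a b3 \<Longrightarrow> b1 \<noteq> b2 \<Longrightarrow> b1 \<noteq> b3 \<Longrightarrow> b2 \<noteq> b3 \<Longrightarrow>
  near b1 c1 \<Longrightarrow> near b2 c2 \<Longrightarrow> near b3 c3 \<Longrightarrow> c1 \<noteq> a \<Longrightarrow> c2 \<noteq> a \<Longrightarrow> c3 \<noteq> a \<Longrightarrow>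
  c1 \<noteq> b2 \<Longrightarrow> c1 \<noteq> b3 \<Longrightarrow> c2 \<noteq> b1 \<Longrightarrow> c2 \<noteq> b3 \<Longrightarrow> c3 \<noteq> b1 \<Longrightarrow> c3 \<noteq> b2 \<Longrightarrow> False"
proof -
  assume h: "a<5" "b1<5" "b2<5" "b3<5" "c1<5" "c2<5" "c3<5"
  "near a b1" "near a b2" "near a b3" "b1 \<noteq> b2" "b1 \<noteq> b3" "b2 \<noteq> b3"
  "near b1 c1" "near b2 c2" "near b3 c3" "c1 \<noteq> a" "c2 \<noteq> a" "c3 \<noteq> a"
  "c1 \<noteq> b2" "c1 \<noteq> b3" "c2 \<noteq> b1" "c2 \<noteq> b3" "c3 \<noteq> b1" "c3 \<noteq> b2"
  define p where "p = (a+1) mod 5"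
  define q where "q = (a+4) mod 5"
  have pq: "p \<noteq> q" "p \<noteq> a" "q \<noteq> a" using p14[OF h(1)] unfolding p_def q_def by auto
  have B: "b1 = a \<or> b1 = p \<or> b1 = q" "b2 = a \<or> b2 = p \<or> b2 = q" "b3 = a \<or> b3 = p \<or> b3 = q"
    using near3[OF h(1)] h unfolding p_def q_def by blast+
  have C1: "b1 = a \<Longrightarrow> c1 = p \<or> c1 = q" using near3[OF h(1) h(5)] h unfolding p_def q_def by auto
  have C2: "b2 = a \<Longrightarrow> c2 = p \<or> c2 = q" using near3[OF h(1) h(6)] h unfolding p_def q_def by auto
  have C3: "b3 = a \<Longrightarrow> c3 = p \<or> c3 = q" using near3[OF h(1) h(7)] h unfolding p_def q_def by auto
  show False
    using B C1 C2 C3 pq h(11-13,20-25) by metis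
qed

definition ok :: "nat \<Rightarrow> nat \<Rightarrow> bool" where
  "ok x y \<longleftrightarrow> x \<noteq> y \<and> \<not> (x = 1 \<and> y = 2) \<and> \<not> (x = 2 \<and> y = 1) \<and> \<not> (x = 3 \<and> y = 4) \<and> \<not> (x = 4 \<and> y = 3)"

lemma p3_col: "a<5 \<Longrightarrow> b<5 \<Longrightarrow> c<5 \<Longrightarrow> d<5 \<Longrightarrow> e<5 \<Longrightarrow> f<5 \<Longrightarrow>
  near b a \<Longrightarrow> near b c \<Longrightarrow> ok a c \<Longrightarrow> near e d \<Longrightarrow> near e f \<Longrightarrow> ok d f \<Longrightarrow>
  ok a d \<Longrightarrow> ok a e \<Longrightarrow> ok a f \<Longrightarrow> ok b d \<Longrightarrow> ok b e \<Longrightarrow> ok b f \<Longrightarrow> ok c d \<Longrightarrow> ok c e \<Longrightarrow> ok c f \<Longrightarrow> False"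
  apply (erule less5E[of b]; erule less5E[of e]; simp only: near_tab; simp; elim disjE; simp add: ok_def)
  done

lemma sh_near: "a<5 \<Longrightarrow> b<5 \<Longrightarrow> k<(5::nat) \<Longrightarrow> near ((a+5-k) mod 5) ((b+5-k) mod 5) = near a b"
  by (erule less5E; erule less5E; erule less5E; simp add: near_def)

lemma sh_inj: "a<5 \<Longrightarrow> b<5 \<Longrightarrow> k<(5::nat) \<Longrightarrow> ((a+5-k) mod 5 = (b+5-k) mod 5) = (a = b)"
  by (erule less5E; erule less5E; erule less5E; simp)

lemma sh_eq: "a<5 \<Longrightarrow> m<5 \<Longrightarrow> k<(5::nat) \<Longrightarrow> ((a+5-k) mod 5 = m) = (a = (k+m) mod 5)"
  by (erule less5E; erule less5E; erule less5E; simp)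

lemma free_r0: "j<5 \<Longrightarrow> k<(5::nat) \<Longrightarrow> near j k \<Longrightarrow> (\<not> near j 0 \<and> \<not> near k 0) \<or> (\<not> near j 1 \<and> \<not> near k 1)
   \<or> (\<not> near j 2 \<and> \<not> near k 2) \<or> (\<not> near j 3 \<and> \<not> near k 3) \<or> (\<not> near j 4 \<and> \<not> near k 4)"
  by (erule less5E; erule less5E; simp add: near_def)

lemma free_r: "j<5 \<Longrightarrow> k<(5::nat) \<Longrightarrow> near j k \<Longrightarrow> \<exists>r<5. \<not> near j r \<and> \<not> near k r"
  apply (drule (2) free_r0)
  apply (elim disjE)
      apply (rule exI[of _ 0], simp)
     apply (rule exI[of _ 1], simp)
    apply (rule exI[of _ 2], simp)
   apply (rule exI[of _ 3], simp)
  apply (rule exI[of _ 4], simp)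
  done

lemma chain_mono: "(\<forall>j. j+1 < (n::nat) \<longrightarrow> S (j+1) \<subseteq> S j) \<Longrightarrow> p \<le> q \<Longrightarrow> q < n \<Longrightarrow> S q \<subseteq> (S p :: 'a set)"
proof (induction q)
  case 0 then show ?case by simp
next
  case (Suc q)
  show ?case
  proof (cases "p = Suc q")
    case False
    then have "p \<le> q" using Suc.prems by simp
    then have "S q \<subseteq> S p" using Suc by simp
    moreover have "S (q+1) \<subseteq> S q" using Suc.prems by simp
    ultimately show ?thesis by simp
  qed simp
qed

lemma cyc_facts:
  assumes "4 \<le> k" "i < k"
  defines "j \<equiv> (i+1) mod k" and "a \<equiv> (i+k-1) mod k" and "b \<equiv> ((i+1) mod k + 1) mod k"
  shows "cycle_E k i a \<and> \<not> cycle_E k j a \<and> a \<noteq> j \<and> cycle_E k j b \<and> \<not> cycle_E k i b \<and> b \<noteq> i \<and> j < k \<and> a < k \<and> b < k"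
proof -
  have m: "\<And>x. x < k \<Longrightarrow> (x+1) mod k = (if x + 1 = k then 0 else x+1)" by auto
  have j: "j = (if i + 1 = k then 0 else i+1)" unfolding j_def using m assms by auto
  have a: "a = (if i = 0 then k - 1 else i - 1)" unfolding a_def using assms
    by (cases "i = 0") (auto simp: mod_if)
  have b: "b = (if j + 1 = k then 0 else j+1)" unfolding b_def j_def[symmetric] using m j assms by auto
  show ?thesis unfolding cycle_E_def using assms(1,2) j a b m[of a] m[of j] m[of b] m[of i]
    by (auto split: if_splits)
qed


lemma ring_props:
  assumes G: "graph V E" and P: "five_ring_partition V E X"
  shows "\<exists>idx. (\<forall>v\<in>V. idx v < 5 \<and> v \<in> X (idx v)) \<and> (\<forall>i<5. \<forall>v\<in>X i. idx v = i) \<and>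
     (\<forall>x y. E x y \<longrightarrow> near (idx x) (idx y)) \<and>
     (\<forall>x\<in>V. \<forall>y\<in>V. x \<noteq> y \<longrightarrow> idx x = idx y \<longrightarrow> E x y) \<and>
     (\<forall>x\<in>V. \<forall>y\<in>V. idx x = idx y \<longrightarrow> closed_nbhd V E x \<subseteq> closed_nbhd V E y \<or> closed_nbhd V E y \<subseteq> closed_nbhd V E x) \<and>
     (\<forall>j<5. \<exists>u\<in>V. idx u = j \<and> (\<forall>v\<in>V. near j (idx v) \<longrightarrow> v = u \<or> E u v))"
proof -
  let ?N = "closed_nbhd V E"
  have ne: "\<And>i. i<5 \<Longrightarrow> X i \<noteq> {}" and un: "(\<Union>i<5. X i) = V"
    and dj: "\<And>i j. i<5 \<Longrightarrow> j<5 \<Longrightarrow> i \<noteq> j \<Longrightarrow> X i \<inter> X j = {}"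
    and ls: "\<And>i. i<5 \<Longrightarrow> \<exists>us. distinct us \<and> set us = X i \<and>
        ?N (us ! 0) = X ((i + 4) mod 5) \<union> X i \<union> X ((i + 1) mod 5) \<and>
        (\<forall>j. j + 1 < length us \<longrightarrow> ?N (us ! (j + 1)) \<subseteq> ?N (us ! j)) \<and>
        X i \<subseteq> ?N (last us)"
    using P unfolding five_ring_partition_def by blast+
  have Esym: "\<And>x y. E x y \<Longrightarrow> E y x" and EV: "\<And>x y. E x y \<Longrightarrow> x \<in> V \<and> y \<in> V"
    using G unfolding graph_def by blast+
  define idx where "idx v = (THE i. i<5 \<and> v \<in> X i)" for v
  have uniq: "idx v = i" if "i<5" "v \<in> X i" for i v
    unfolding idx_def
  proof (rule the_equality)
    show "i < 5 \<and> v \<in> X i" using that by simp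
    fix j assume "j < 5 \<and> v \<in> X j"
    then show "j = i" using dj[of i j] that by blast
  qed
  have cov: "idx v < 5 \<and> v \<in> X (idx v)" if vV: "v \<in> V" for v
  proof -
    obtain i where "i<5" "v \<in> X i" using vV un by blast
    then show ?thesis using uniq by simp
  qed
  have XV: "X i \<subseteq> V" if "i<5" for i using un that by blast
  have key: "(\<forall>v\<in>X i. X i \<subseteq> ?N v \<and> ?N v \<subseteq> X ((i + 4) mod 5) \<union> X i \<union> X ((i + 1) mod 5)) \<and>
     (\<forall>x\<in>X i. \<forall>y\<in>X i. ?N x \<subseteq> ?N y \<or> ?N y \<subseteq> ?N x) \<and>
     (\<exists>u\<in>X i. ?N u = X ((i + 4) mod 5) \<union> X i \<union> X ((i + 1) mod 5))" if i5: "i<5" for i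
  proof -
    obtain us where us: "distinct us" "set us = X i"
      "?N (us ! 0) = X ((i + 4) mod 5) \<union> X i \<union> X ((i + 1) mod 5)"
      "\<forall>j. j + 1 < length us \<longrightarrow> ?N (us ! (j + 1)) \<subseteq> ?N (us ! j)"
      "X i \<subseteq> ?N (last us)" using ls[OF i5] by blast
    have nn: "us \<noteq> []" using us(2) ne[OF that] by auto
    have cm: "p \<le> q \<Longrightarrow> q < length us \<Longrightarrow> ?N (us!q) \<subseteq> ?N (us!p)" for p q
      using chain_mono[of "length us" "\<lambda>j. ?N (us!j)" p q] us(4) by simp
    have lst: "last us = us ! (length us - 1)" using nn by (simp add: last_conv_nth)
    have A: "\<forall>v\<in>X i. X i \<subseteq> ?N v \<and> ?N v \<subseteq> X ((i + 4) mod 5) \<union> X i \<union> X ((i + 1) mod 5)"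
    proof
      fix v assume "v \<in> X i"
      then obtain p where p: "p < length us" "v = us ! p" using us(2) by (metis in_set_conv_nth)
      have "?N (last us) \<subseteq> ?N v" using cm[of p "length us - 1"] p lst by simp
      moreover have "?N v \<subseteq> ?N (us!0)" using cm[of 0 p] p by simp
      ultimately show "X i \<subseteq> ?N v \<and> ?N v \<subseteq> X ((i + 4) mod 5) \<union> X i \<union> X ((i + 1) mod 5)"
        using us(3,5) by blast
    qed
    have B: "\<forall>x\<in>X i. \<forall>y\<in>X i. ?N x \<subseteq> ?N y \<or> ?N y \<subseteq> ?N x"
    proof (intro ballI)
      fix x y assume "x \<in> X i" "y \<in> X i"
      then obtain p q where "p < length us" "x = us ! p" "q < length us" "y = us ! q"
        using us(2) by (metis in_set_conv_nth)
      then show "?N x \<subseteq> ?N y \<or> ?N y \<subseteq> ?N x" using cm[of p q] cm[of q p] by (cases "p \<le> q") auto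
    qed
    have "us ! 0 \<in> X i" using nn us(2) by (metis length_greater_0_conv nth_mem)
    then show ?thesis using A B us(3) by blast
  qed
  have m4: "(i+4) mod 5 < 5" "(i+1) mod 5 < 5" for i :: nat by auto
  have nr: "near (idx x) (idx y)" if "E x y" for x y
  proof -
    have xy: "x \<in> V" "y \<in> V" using EV[OF that] by auto
    let ?i = "idx x"
    have i: "?i < 5" "x \<in> X ?i" using cov[OF xy(1)] by auto
    have "y \<in> ?N x" using xy that unfolding closed_nbhd_def by simp
    then have "y \<in> X ((?i + 4) mod 5) \<union> X ?i \<union> X ((?i + 1) mod 5)" using key[OF i(1)] i(2) by blast
    then have "idx y = (?i + 4) mod 5 \<or> idx y = ?i \<or> idx y = (?i + 1) mod 5"
      using uniq m4 i(1) by blast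
    then show ?thesis using near_opts i(1) by blast
  qed
  have sm: "E x y" if "x \<in> V" "y \<in> V" "x \<noteq> y" "idx x = idx y" for x y
  proof -
    have "x \<in> X (idx x)" "idx x < 5" using cov[OF that(1)] by auto
    moreover have "y \<in> X (idx x)" using cov[OF that(2)] that by simp
    ultimately have "y \<in> ?N x" using key by blast
    then show ?thesis using that unfolding closed_nbhd_def by auto
  qed
  have cp: "?N x \<subseteq> ?N y \<or> ?N y \<subseteq> ?N x" if "x \<in> V" "y \<in> V" "idx x = idx y" for x y
  proof -
    have "x \<in> X (idx x)" "idx x < 5" using cov[OF that(1)] by auto
    moreover have "y \<in> X (idx x)" using cov[OF that(2)] that by simp
    ultimately show ?thesis using key by blast
  qed
  have fs: "\<exists>u\<in>V. idx u = j \<and> (\<forall>v\<in>V. near j (idx v) \<longrightarrow> v = u \<or> E u v)" if j5: "j < 5" for j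
  proof -
    obtain u where u: "u \<in> X j" "?N u = X ((j + 4) mod 5) \<union> X j \<union> X ((j + 1) mod 5)"
      using key[OF j5] by blast
    have "v = u \<or> E u v" if "v \<in> V" "near j (idx v)" for v
    proof -
      have iv: "idx v < 5" "v \<in> X (idx v)" using cov that by auto
      have "idx v = (j + 4) mod 5 \<or> idx v = j \<or> idx v = (j + 1) mod 5"
        using near_opts_rev[OF j5 iv(1) that(2)] .
      then have "v \<in> X ((j + 4) mod 5) \<union> X j \<union> X ((j + 1) mod 5)" using iv(2) by (metis UnI1 UnI2)
      then have "v \<in> ?N u" unfolding u(2) .
      then show ?thesis unfolding closed_nbhd_def by auto
    qed
    then show ?thesis using u(1) uniq[OF that u(1)] XV[OF that] by blast
  qed
  show ?thesis
    apply (rule exI[of _ idx])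
    using cov uniq nr sm cp fs by blast
qed


locale ring5 =
  fixes V :: "'a set" and E :: "'a \<Rightarrow> 'a \<Rightarrow> bool" and idx :: "'a \<Rightarrow> nat"
  assumes Esym: "E x y \<Longrightarrow> E y x"
    and EV: "E x y \<Longrightarrow> x \<in> V \<and> y \<in> V"
    and irr: "\<not> E x x"
    and lt: "v \<in> V \<Longrightarrow> idx v < 5"
    and nr: "E x y \<Longrightarrow> near (idx x) (idx y)"
    and sm: "x \<in> V \<Longrightarrow> y \<in> V \<Longrightarrow> x \<noteq> y \<Longrightarrow> idx x = idx y \<Longrightarrow> E x y"
    and cp: "x \<in> V \<Longrightarrow> y \<in> V \<Longrightarrow> idx x = idx y \<Longrightarrow>
       closed_nbhd V E x \<subseteq> closed_nbhd V E y \<or> closed_nbhd V E y \<subseteq> closed_nbhd V E x"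
    and fs: "j < 5 \<Longrightarrow> \<exists>u\<in>V. idx u = j \<and> (\<forall>v\<in>V. near j (idx v) \<longrightarrow> v = u \<or> E u v)"
begin

lemma nadj_ne: "x \<in> V \<Longrightarrow> y \<in> V \<Longrightarrow> x \<noteq> y \<Longrightarrow> \<not> E x y \<Longrightarrow> idx x \<noteq> idx y"
  using sm by blast

lemma zs: "E x a \<Longrightarrow> \<not> E y a \<Longrightarrow> a \<noteq> y \<Longrightarrow> E y b \<Longrightarrow> \<not> E x b \<Longrightarrow> b \<noteq> x \<Longrightarrow> idx x \<noteq> idx y"
proof
  assume a: "E x a" "\<not> E y a" "a \<noteq> y" "E y b" "\<not> E x b" "b \<noteq> x" "idx x = idx y"
  have V: "x \<in> V" "y \<in> V" "a \<in> V" "b \<in> V" using a EV by blast+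
  have "a \<in> closed_nbhd V E x" "a \<notin> closed_nbhd V E y" "b \<in> closed_nbhd V E y" "b \<notin> closed_nbhd V E x"
    using a V unfolding closed_nbhd_def by auto
  then show False using cp[OF V(1,2) a(7)] by blast
qed

lemma cyc_inj:
  assumes k: "4 \<le> k" and inj: "inj_on f {0..<k}" and fV: "f ` {0..<k} \<subseteq> V"
    and iff: "\<forall>x\<in>{0..<k}. \<forall>y\<in>{0..<k}. cycle_E k x y = E (f x) (f y)"
  shows "inj_on (idx \<circ> f) {0..<k}"
proof -
  have st: "idx (f i) \<noteq> idx (f ((i+1) mod k))" if "i < k" for i
  proof -
    note c = cyc_facts[OF k that]
    let ?j = "(i+1) mod k" and ?a = "(i+k-1) mod k" and ?b = "((i+1) mod k + 1) mod k"
    show ?thesis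
    proof (rule zs[of _ "f ?a" _ "f ?b"])
      show "E (f i) (f ?a)" using c iff that by auto
      show "\<not> E (f ?j) (f ?a)" using c iff that by auto
      show "f ?a \<noteq> f ?j" using c inj that by (auto dest: inj_onD)
      show "E (f ?j) (f ?b)" using c iff that by auto
      show "\<not> E (f i) (f ?b)" using c iff that by auto
      show "f ?b \<noteq> f i" using c inj that by (auto dest: inj_onD)
    qed
  qed
  show ?thesis
  proof (rule inj_onI)
    fix i j assume ij: "i \<in> {0..<k}" "j \<in> {0..<k}" "(idx \<circ> f) i = (idx \<circ> f) j"
    show "i = j"
    proof (rule ccontr)
      assume "i \<noteq> j"
      then have "f i \<noteq> f j" using inj ij by (auto dest: inj_onD)
      moreover have "f i \<in> V" "f j \<in> V" using fV ij by auto
      ultimately have "E (f i) (f j)" using sm ij(3) by simp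
      then have "cycle_E k i j" using iff ij by auto
      then have "j = (i+1) mod k \<or> i = (j+1) mod k" unfolding cycle_E_def by auto
      moreover have "idx (f i) \<noteq> idx (f ((i+1) mod k))" "idx (f j) \<noteq> idx (f ((j+1) mod k))"
        using st ij(1,2) by auto
      moreover have "idx (f i) = idx (f j)" using ij(3) by simp
      ultimately show False by metis
    qed
  qed
qed

lemma no_long_cycle:
  assumes "6 \<le> k" "contains_induced V E (cycle_V k) (cycle_E k)"
  shows False
proof -
  obtain f where f: "inj_on f {0..<k}" "f ` {0..<k} \<subseteq> V"
    "\<forall>x\<in>{0..<k}. \<forall>y\<in>{0..<k}. cycle_E k x y = E (f x) (f y)"
    using assms(2) unfolding contains_induced_def cycle_V_def by blast
  have "inj_on (idx \<circ> f) {0..<k}" using cyc_inj[OF _ f] assms(1) by simp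
  moreover have "(idx \<circ> f) ` {0..<k} \<subseteq> {0..<5}" using f(2) by (auto intro!: lt)
  ultimately have "card {0..<k} \<le> card {0..<(5::nat)}" by (rule card_inj_on_le) simp
  then show False using assms(1) by simp
qed

lemma no_c4:
  assumes "contains_induced V E (cycle_V 4) (cycle_E 4)"
  shows False
proof -
  obtain f where f: "inj_on f {0..<4}" "f ` {0..<4} \<subseteq> V"
    "\<forall>x\<in>{0..<4}. \<forall>y\<in>{0..<4}. cycle_E 4 x y = E (f x) (f y)"
    using assms unfolding contains_induced_def cycle_V_def by blast
  have inj: "inj_on (idx \<circ> f) {0..<4}" using cyc_inj[OF _ f] by simp
  have d: "idx (f i) \<noteq> idx (f j)" if "i < 4" "j < 4" "i \<noteq> j" for i j
    using inj_onD[OF inj, of i j] that by auto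
  have e: "E (f i) (f j)" if "cycle_E 4 i j" "i < 4" "j < 4" for i j using f(3) that by auto
  have l: "idx (f i) < 5" if "i < 4" for i using f(2) that by (intro lt) auto
  show False
    apply (rule c4_col[of "idx (f 0)" "idx (f 1)" "idx (f 2)" "idx (f 3)"])
    using l d nr[OF e] by (simp_all add: cycle_E_def)
qed

lemma no_pent:
  assumes "contains_induced V E pent3_V pent3_E"
  shows False
proof -
  obtain f where f: "inj_on f {0..<7}" "f ` {0..<7} \<subseteq> V"
    "\<forall>x\<in>{0..<7}. \<forall>y\<in>{0..<7}. pent3_E x y = E (f x) (f y)"
    using assms unfolding contains_induced_def pent3_V_def by blast
  have e: "E (f i) (f j)" if "pent3_E i j" "i < 7" "j < 7" for i j using f(3) that by auto
  have ne: "\<not> E (f i) (f j)" if "\<not> pent3_E i j" "i < 7" "j < 7" for i j using f(3) that by auto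
  have fi: "f i \<noteq> f j" if "i < 7" "j < 7" "i \<noteq> j" for i j using f(1) that by (auto dest: inj_onD)
  have fv: "f i \<in> V" if "i < 7" for i using f(2) that by auto
  have d: "idx (f i) \<noteq> idx (f j)" if "\<not> pent3_E i j" "i < 7" "j < 7" "i \<noteq> j" for i j
    using nadj_ne[OF fv fv fi ne] that by blast
  have l: "idx (f i) < 5" if "i < 7" for i using that by (intro lt fv)
  show False
    apply (rule pent_col[of "idx (f 0)" "idx (f 1)" "idx (f 2)" "idx (f 3)" "idx (f 4)" "idx (f 5)" "idx (f 6)"])
    by (rule l nr[OF e] d; simp add: pent3_E_def doubleton_eq_iff)+
qed

lemma no_univ: "v \<in> V \<Longrightarrow> \<not> universal V E v"
proof
  assume v: "v \<in> V" "universal V E v"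
  have "(idx v + 2) mod 5 < 5" by simp
  then obtain w where w: "w \<in> V" "idx w = (idx v + 2) mod 5" using fs by blast
  have "idx v < 5" using lt v by simp
  then have nn: "\<not> near (idx v) (idx w)" "idx w \<noteq> idx v" using w(2)
    by (erule_tac less5E; simp add: near_def)+
  then have "w \<noteq> v" by auto
  then have "E v w" using v w unfolding universal_def by auto
  then show False using nr nn by blast
qed

lemma no_simp: "v \<in> V \<Longrightarrow> \<not> simplicial V E v"
proof
  assume v: "v \<in> V" "simplicial V E v"
  have lv: "idx v < 5" using lt v by simp
  obtain u1 where u1: "u1 \<in> V" "idx u1 = (idx v + 4) mod 5" "\<forall>w\<in>V. near (idx u1) (idx w) \<longrightarrow> w = u1 \<or> E u1 w"
    using fs[of "(idx v + 4) mod 5"] by auto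
  obtain u2 where u2: "u2 \<in> V" "idx u2 = (idx v + 1) mod 5" "\<forall>w\<in>V. near (idx u2) (idx w) \<longrightarrow> w = u2 \<or> E u2 w"
    using fs[of "(idx v + 1) mod 5"] by auto
  have c: "near (idx u1) (idx v)" "near (idx u2) (idx v)" "idx u1 \<noteq> idx v" "idx u2 \<noteq> idx v"
     "\<not> near (idx u1) (idx u2)" "idx u1 \<noteq> idx u2"
    using lv unfolding u1(2) u2(2) by (erule_tac less5E; simp add: near_def)+
  have "E u1 v" "E u2 v" using u1(3) u2(3) v c by auto
  then have "E v u1" "E v u2" using Esym by auto
  moreover have "u1 \<noteq> u2" using c by auto
  ultimately have "E u1 u2" using v u1 u2 unfolding simplicial_def by blast
  then show False using nr c by blast
qed

lemma anticon: "anticonnected V E"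
  unfolding anticonnected_def connected_graph_def
proof (intro ballI)
  fix x y assume xy: "x \<in> V" "y \<in> V"
  let ?R = "\<lambda>a b. a \<in> V \<and> b \<in> V \<and> complement V E a b"
  have cE: "?R a b" if "a \<in> V" "b \<in> V" "\<not> near (idx a) (idx b)" for a b
  proof -
    have "a \<noteq> b" using that unfolding near_def by auto
    moreover have "\<not> E a b" using nr that by blast
    ultimately show ?thesis using that unfolding complement_def by auto
  qed
  show "?R\<^sup>*\<^sup>* x y"
  proof (cases "near (idx x) (idx y)")
    case False
    then show ?thesis using cE xy by blast
  next
    case True
    obtain r where r: "r < 5" "\<not> near (idx x) r" "\<not> near (idx y) r" using free_r[OF lt lt True] xy by blast
    obtain z where z: "z \<in> V" "idx z = r" using fs[OF r(1)] by blast
    have "?R x z" using cE xy z r by auto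
    moreover have "?R z y"
    proof -
      have "\<not> near r (idx y)" using r(3) unfolding near_def by auto
      then show ?thesis using cE xy z by auto
    qed
    ultimately show ?thesis by (rule converse_rtranclp_into_rtranclp[OF _ r_into_rtranclp])
  qed
qed

end

locale crown5 = ring5 +
  assumes cr1: "x \<in> V \<Longrightarrow> y \<in> V \<Longrightarrow> idx x = 4 \<Longrightarrow> idx y = 3 \<Longrightarrow> E x y"
    and cr2: "x \<in> V \<Longrightarrow> y \<in> V \<Longrightarrow> idx x = 1 \<Longrightarrow> idx y = 2 \<Longrightarrow> E x y"
begin

lemma nadj_ok: "x \<in> V \<Longrightarrow> y \<in> V \<Longrightarrow> x \<noteq> y \<Longrightarrow> \<not> E x y \<Longrightarrow> ok (idx x) (idx y)"
  unfolding ok_def using nadj_ne cr1 cr2 Esym by metis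

lemma no_2p3:
  assumes "contains_induced V E twoP3_V twoP3_E"
  shows False
proof -
  obtain f where f: "inj_on f {0..<6}" "f ` {0..<6} \<subseteq> V"
    "\<forall>x\<in>{0..<6}. \<forall>y\<in>{0..<6}. twoP3_E x y = E (f x) (f y)"
    using assms unfolding contains_induced_def twoP3_V_def by blast
  have e: "E (f i) (f j)" if "twoP3_E i j" "i < 6" "j < 6" for i j using f(3) that by auto
  have ne: "\<not> E (f i) (f j)" if "\<not> twoP3_E i j" "i < 6" "j < 6" for i j using f(3) that by auto
  have fi: "f i \<noteq> f j" if "i < 6" "j < 6" "i \<noteq> j" for i j using f(1) that by (auto dest: inj_onD)
  have fv: "f i \<in> V" if "i < 6" for i using f(2) that by auto
  have d: "ok (idx (f i)) (idx (f j))" if "\<not> twoP3_E i j" "i < 6" "j < 6" "i \<noteq> j" for i j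
    using nadj_ok[OF fv fv fi ne] that by blast
  have l: "idx (f i) < 5" if "i < 6" for i using that by (intro lt fv)
  show False
    apply (rule p3_col[of "idx (f 0)" "idx (f 1)" "idx (f 2)" "idx (f 3)" "idx (f 4)" "idx (f 5)"])
    by (rule l nr[OF e] d; simp add: twoP3_E_def doubleton_eq_iff)+
qed

end

theorem proposition6p7:
  fixes V :: "'a set" and E :: "'a \<Rightarrow> 'a \<Rightarrow> bool"
  assumes "graph V E" and "five_crown V E"
  shows "H_free V E twoP3_V twoP3_E \<and> H_free V E (cycle_V 4) (cycle_E 4) \<and>
         H_free V E (cycle_V 6) (cycle_E 6) \<and> H_free V E (cycle_V 7) (cycle_E 7) \<and>
         H_free V E pent3_V pent3_E \<and>
         anticonnected V E \<and>
         (\<forall>v\<in>V. \<not> universal V E v) \<and> (\<forall>v\<in>V. \<not> simplicial V E v)"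
proof -
  obtain X k where P: "five_ring_partition V E X" and k: "k < 5"
    and c1: "complete_to E (X ((k + 4) mod 5)) (X ((k + 3) mod 5))"
    and c2: "complete_to E (X ((k + 1) mod 5)) (X ((k + 2) mod 5))"
    using assms(2) unfolding five_crown_def by blast
  obtain idx where I: "\<forall>v\<in>V. idx v < 5 \<and> v \<in> X (idx v)" "\<forall>i<5. \<forall>v\<in>X i. idx v = i"
     "\<forall>x y. E x y \<longrightarrow> near (idx x) (idx y)"
     "\<forall>x\<in>V. \<forall>y\<in>V. x \<noteq> y \<longrightarrow> idx x = idx y \<longrightarrow> E x y"
     "\<forall>x\<in>V. \<forall>y\<in>V. idx x = idx y \<longrightarrow> closed_nbhd V E x \<subseteq> closed_nbhd V E y \<or> closed_nbhd V E y \<subseteq> closed_nbhd V E x"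
     "\<forall>j<5. \<exists>u\<in>V. idx u = j \<and> (\<forall>v\<in>V. near j (idx v) \<longrightarrow> v = u \<or> E u v)"
    using ring_props[OF assms(1) P] by blast
  have G: "\<And>x y. E x y \<Longrightarrow> E y x" "\<And>x y. E x y \<Longrightarrow> x \<in> V \<and> y \<in> V" "\<And>x. \<not> E x x"
    using assms(1) unfolding graph_def by blast+
  define col where "col v = (idx v + 5 - k) mod 5" for v
  have colq: "(col x = col y) = (idx x = idx y)" if "x \<in> V" "y \<in> V" for x y
    unfolding col_def using sh_inj[of "idx x" "idx y" k] I(1) that k by auto
  have colm: "(col x = m) = (idx x = (k + m) mod 5)" if "x \<in> V" "m < 5" for x m
    unfolding col_def using sh_eq[of "idx x" m k] I(1) that k by auto
  interpret crown5 V E col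
  proof
    show "E x y \<Longrightarrow> E y x" for x y by (rule G(1))
    show "E x y \<Longrightarrow> x \<in> V \<and> y \<in> V" for x y by (rule G(2))
    show "\<not> E x x" for x by (rule G(3))
    show "v \<in> V \<Longrightarrow> col v < 5" for v unfolding col_def by simp
    show "E x y \<Longrightarrow> near (col x) (col y)" for x y
      unfolding col_def using sh_near[of "idx x" "idx y" k] I(1,3) G(2)[of x y] k by auto
    show "x \<in> V \<Longrightarrow> y \<in> V \<Longrightarrow> x \<noteq> y \<Longrightarrow> col x = col y \<Longrightarrow> E x y" for x y
      using colq I(4) by blast
    show "x \<in> V \<Longrightarrow> y \<in> V \<Longrightarrow> col x = col y \<Longrightarrow>
       closed_nbhd V E x \<subseteq> closed_nbhd V E y \<or> closed_nbhd V E y \<subseteq> closed_nbhd V E x" for x y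
      using colq I(5) by blast
    show "\<exists>u\<in>V. col u = j \<and> (\<forall>v\<in>V. near j (col v) \<longrightarrow> v = u \<or> E u v)" if j: "j < 5" for j
    proof -
      have j': "(k + j) mod 5 < 5" by simp
      obtain u where u: "u \<in> V" "idx u = (k + j) mod 5" "\<forall>v\<in>V. near ((k + j) mod 5) (idx v) \<longrightarrow> v = u \<or> E u v"
        using I(6) j' by blast
      have cu: "col u = j" using colm[OF u(1) j] u(2) by simp
      have "near ((k + j) mod 5) (idx v)" if "v \<in> V" "near j (col v)" for v
      proof -
        have "near ((((k + j) mod 5) + 5 - k) mod 5) ((idx v + 5 - k) mod 5)"
          using that(2) cu u(2) unfolding col_def by simp
        then show ?thesis using sh_near[of "(k + j) mod 5" "idx v" k] I(1) that(1) k by auto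
      qed
      then show ?thesis using u cu by blast
    qed
    show "E x y" if h: "x \<in> V" "y \<in> V" "col x = 4" "col y = 3" for x y
    proof -
      have "idx x = (k + 4) mod 5" "idx y = (k + 3) mod 5" using colm[of x 4] colm[of y 3] h by auto
      moreover have "x \<in> X (idx x)" "y \<in> X (idx y)" using I(1) h by auto
      ultimately show ?thesis using c1 unfolding complete_to_def by auto
    qed
    show "E x y" if h: "x \<in> V" "y \<in> V" "col x = 1" "col y = 2" for x y
    proof -
      have "idx x = (k + 1) mod 5" "idx y = (k + 2) mod 5" using colm[of x 1] colm[of y 2] h by auto
      moreover have "x \<in> X (idx x)" "y \<in> X (idx y)" using I(1) h by auto
      ultimately show ?thesis using c2 unfolding complete_to_def by auto
    qed
  qed
  show ?thesis
    unfolding H_free_def using no_2p3 no_c4 no_long_cycle[of 6] no_long_cycle[of 7] no_pent anticon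
      no_univ no_simp by auto
qed

end
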